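(* Let $G$ be a graph with vertices $a,b,c,d$. When the Laplacian $L$ of $G$ is used as Hamiltonian, there is no perfect state transfer between $e_a+e_b$ and $e_c-e_d$; that is, there are no $t\ge 0$ and $\gamma\in\mathbb{C}$ with $|\gamma|=1$ such that $\exp(itL)(e_a+e_b)=\gamma(e_c-e_d)$ or $\exp(itL)(e_c-e_d)=\gamma(e_a+e_b)$.
   Context: $L=\Delta-A$ where $\Delta$ is the degree matrix and $A$ the adjacency matrix of $G$; $e_v$ is the standard basis vector of vertex $v$. *)

theory Defs
  imports "HOL-Analysis.Analysis"
begin

definition simple_graph :: "('n::finite \<Rightarrow> 'n \<Rightarrow> bool) \<Rightarrow> bool" where
  "simple_graph E \<longleftrightarrow> (\<forall>u v. E u v \<longrightarrow> E v u) \<and> (\<forall>v. \<not> E v v)"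

definition laplacian :: "('n::finite \<Rightarrow> 'n \<Rightarrow> bool) \<Rightarrow> complex^'n^'n" where
  "laplacian E = (\<chi> i j. (if i = j then of_nat (card {k. E i k}) else 0) - (if E i j then 1 else 0))"

fun matpow :: "complex^'n::finite^'n \<Rightarrow> nat \<Rightarrow> complex^'n^'n" where
  "matpow A 0 = mat 1"
| "matpow A (Suc k) = A ** matpow A k"

definition mat_exp :: "complex^'n::finite^'n \<Rightarrow> complex^'n^'n" where
  "mat_exp A = (\<Sum>k. inverse (fact k) *\<^sub>R matpow A k)"

definition basis_vec :: "'n::finite \<Rightarrow> complex^'n" where
  "basis_vec v = axis v 1"

end

theory Submission
  imports Defs
begin

definition N1 :: "complex^'n::finite^'n \<Rightarrow> real" where
  "N1 X = (\<Sum>i\<in>UNIV. \<Sum>j\<in>UNIV. cmod (X$i$j))"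

definition ssum :: "complex^'n::finite \<Rightarrow> complex" where
  "ssum v = (\<Sum>i\<in>UNIV. v$i)"

lemma norm_vec_le_sum: "norm (x::'a::real_normed_vector^'n) \<le> (\<Sum>i\<in>UNIV. norm (x$i))"
  unfolding norm_vec_def by (rule L2_set_le_sum) auto

lemma norm_le_N1: "norm X \<le> N1 X"
proof -
  have "norm X \<le> (\<Sum>i\<in>UNIV. norm (X$i))" by (rule norm_vec_le_sum)
  also have "\<dots> \<le> N1 X" unfolding N1_def
    by (rule sum_mono) (rule norm_vec_le_sum)
  finally show ?thesis .
qed

lemma N1_mult: "N1 (X ** Y) \<le> N1 X * N1 Y"
proof -
  have "N1 (X ** Y) = (\<Sum>i\<in>UNIV. \<Sum>j\<in>UNIV. cmod (\<Sum>k\<in>UNIV. X$i$k * Y$k$j))"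
    unfolding N1_def matrix_matrix_mult_def by simp
  also have "\<dots> \<le> (\<Sum>i\<in>UNIV. \<Sum>j\<in>UNIV. \<Sum>k\<in>UNIV. cmod (X$i$k) * cmod (Y$k$j))"
    by (intro sum_mono order_trans[OF norm_sum]) (simp add: norm_mult)
  also have "\<dots> \<le> (\<Sum>i\<in>UNIV. \<Sum>k\<in>UNIV. \<Sum>j\<in>UNIV. \<Sum>k'\<in>UNIV. cmod (X$i$k) * cmod (Y$k'$j))"
  proof -
    have "(\<Sum>j\<in>UNIV. \<Sum>k\<in>UNIV. cmod (X$i$k) * cmod (Y$k$j))
        \<le> (\<Sum>k\<in>UNIV. \<Sum>j\<in>UNIV. \<Sum>k'\<in>UNIV. cmod (X$i$k) * cmod (Y$k'$j))" for i
    proof -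
      have "(\<Sum>j\<in>UNIV. \<Sum>k\<in>UNIV. cmod (X$i$k) * cmod (Y$k$j))
         = (\<Sum>k\<in>UNIV. \<Sum>j\<in>UNIV. cmod (X$i$k) * cmod (Y$k$j))" by (rule sum.swap)
      also have "\<dots> \<le> (\<Sum>k\<in>UNIV. \<Sum>j\<in>UNIV. \<Sum>k'\<in>UNIV. cmod (X$i$k) * cmod (Y$k'$j))"
      proof (rule sum_mono, rule sum_mono)
        fix k j
        show "cmod (X$i$k) * cmod (Y$k$j) \<le> (\<Sum>k'\<in>UNIV. cmod (X$i$k) * cmod (Y$k'$j))"
          by (rule member_le_sum[of k]) auto
      qed
      finally show ?thesis .
    qed
    then show ?thesis by (rule sum_mono)
  qed
  also have "\<dots> = N1 X * N1 Y"
  proof -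
    have e: "(\<Sum>j\<in>UNIV. \<Sum>k'\<in>UNIV. x * cmod (Y$k'$j)) = x * N1 Y" for x
      unfolding N1_def by (subst sum.swap) (simp add: sum_distrib_left)
    show ?thesis by (simp only: e) (simp add: N1_def sum_distrib_right)
  qed
  finally show ?thesis .
qed

lemma N1_nonneg: "N1 X \<ge> 0"
  unfolding N1_def by (intro sum_nonneg) auto

lemma N1_matpow: fixes A :: "complex^'n::finite^'n" shows "N1 (matpow A k) \<le> N1 (mat 1 :: complex^'n::finite^'n) * N1 A ^ k"
proof (induction k)
  case 0 then show ?case by simp
next
  case (Suc k)
  have "N1 (matpow A (Suc k)) \<le> N1 A * N1 (matpow A k)" using N1_mult by simp
  also have "\<dots> \<le> N1 A * (N1 (mat 1 :: complex^'n::finite^'n) * N1 A ^ k)"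
    using Suc N1_nonneg by (intro mult_left_mono) auto
  finally show ?case by (simp add: algebra_simps)
qed

lemma summable_exp_series: "summable (\<lambda>k. inverse (fact k) *\<^sub>R matpow (A::complex^'n::finite^'n) k)"
proof (rule summable_comparison_test)
  let ?C = "N1 (mat 1 :: complex^'n::finite^'n)"
  show "summable (\<lambda>k. ?C * (inverse (fact k) * N1 A ^ k))"
    by (intro summable_mult summable_exp)
  show "\<exists>N. \<forall>n\<ge>N. norm (inverse (fact n) *\<^sub>R matpow A n) \<le> ?C * (inverse (fact n) * N1 A ^ n)"
  proof (intro exI allI impI)
    fix n :: nat
    have "norm (inverse (fact n) *\<^sub>R matpow A n) = inverse (fact n) * norm (matpow A n)"
      by simp
    also have "\<dots> \<le> inverse (fact n) * (?C * N1 A ^ n)"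
      by (intro mult_left_mono order_trans[OF norm_le_N1 N1_matpow]) auto
    finally show "norm (inverse (fact n) *\<^sub>R matpow A n) \<le> ?C * (inverse (fact n) * N1 A ^ n)"
      by (simp add: algebra_simps)
  qed
qed

lemma ssum_lap: assumes "simple_graph E" shows "ssum (laplacian E *v v) = 0"
proof -
  have sym: "{i. E i j} = {k. E j k}" for j using assms unfolding simple_graph_def by auto
  have col: "(\<Sum>i\<in>UNIV. laplacian E $ i $ j) = 0" for j
  proof -
    have "(\<Sum>i\<in>UNIV. laplacian E $ i $ j) =
       (\<Sum>i\<in>UNIV. (if i = j then of_nat (card {k. E i k}) else 0)) - (\<Sum>i\<in>UNIV. (if E i j then 1 else 0))"
      unfolding laplacian_def by (simp add: sum_subtractf)
    also have "\<dots> = of_nat (card {k. E j k}) - of_nat (card {i. E i j})"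
      by (simp add: sum.If_cases)
    finally show ?thesis using sym by simp
  qed
  have "ssum (laplacian E *v v) = (\<Sum>i\<in>UNIV. \<Sum>j\<in>UNIV. laplacian E $ i $ j * v $ j)"
    unfolding ssum_def matrix_vector_mult_def by simp
  also have "\<dots> = (\<Sum>j\<in>UNIV. (\<Sum>i\<in>UNIV. laplacian E $ i $ j) * v $ j)"
    by (subst sum.swap) (simp add: sum_distrib_right)
  also have "\<dots> = 0" using col by simp
  finally show ?thesis .
qed

lemma ssum_mat: "ssum (mat c *v v) = c * ssum v"
proof -
  have "mat c *v v = c *s v"
    by (simp add: vec_eq_iff matrix_vector_mult_def mat_def if_distrib[of "\<lambda>x. x * _"] cong: if_cong)
  then show ?thesis unfolding ssum_def by (simp add: sum_distrib_left)
qed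

lemma ssum_M: assumes "simple_graph E"
  shows "ssum ((mat c ** laplacian E) *v v) = 0"
  by (simp add: matrix_vector_mul_assoc[symmetric] ssum_mat ssum_lap[OF assms])

lemma bl_phi: "bounded_linear (\<lambda>X::complex^'n::finite^'n. ssum (X *v v))"
proof -
  have "linear (\<lambda>X::complex^'n::finite^'n. ssum (X *v v))"
    unfolding ssum_def matrix_vector_mult_def
  proof (rule linearI)
    fix X Y :: "complex^'n::finite^'n"
    show "(\<Sum>i\<in>UNIV. (\<chi> i. \<Sum>j\<in>UNIV. (X + Y) $ i $ j * v $ j) $ i) =
      (\<Sum>i\<in>UNIV. (\<chi> i. \<Sum>j\<in>UNIV. X $ i $ j * v $ j) $ i) + (\<Sum>i\<in>UNIV. (\<chi> i. \<Sum>j\<in>UNIV. Y $ i $ j * v $ j) $ i)"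
      by (simp add: sum.distrib distrib_right)
  next
    fix r :: real and X :: "complex^'n::finite^'n"
    show "(\<Sum>i\<in>UNIV. (\<chi> i. \<Sum>j\<in>UNIV. (r *\<^sub>R X) $ i $ j * v $ j) $ i) =
       r *\<^sub>R (\<Sum>i\<in>UNIV. (\<chi> i. \<Sum>j\<in>UNIV. X $ i $ j * v $ j) $ i)"
      by (simp add: scaleR_sum_right mult_scaleR_left)
  qed
  then show ?thesis by (simp add: linear_conv_bounded_linear)
qed

lemma ssum_exp: assumes "simple_graph E"
  shows "ssum (mat_exp (mat c ** laplacian E) *v v) = ssum v"
proof -
  let ?M = "mat c ** laplacian E"
  let ?f = "\<lambda>k. inverse (fact k) *\<^sub>R matpow ?M k"
  have "?f sums mat_exp ?M" unfolding mat_exp_def using summable_exp_series by (rule summable_sums)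
  then have s: "(\<lambda>k. ssum (?f k *v v)) sums ssum (mat_exp ?M *v v)"
    by (rule bounded_linear.sums[OF bl_phi])
  have "ssum (?f k *v v) = (if k = 0 then ssum v else 0)" for k
  proof -
    have "ssum (?f k *v v) = inverse (fact k) * ssum (matpow ?M k *v v)"
      using linear_scale[OF bounded_linear.linear[OF bl_phi], of "inverse (fact k)" "matpow ?M k" v]
      by (simp add: scaleR_conv_of_real)
    moreover have "ssum (matpow ?M k *v v) = (if k = 0 then ssum v else 0)"
      by (cases k) (simp_all add: matrix_vector_mul_assoc[symmetric] ssum_mat ssum_lap[OF assms])
    ultimately show ?thesis by simp
  qed
  then have "(\<lambda>k. ssum (?f k *v v)) sums ssum v"
    using sums_single[of 0 "\<lambda>_. ssum v"] by simp
  with s show ?thesis using sums_unique2 by blast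
qed

lemma ssum_basis: "ssum (basis_vec a) = 1"
  unfolding ssum_def basis_vec_def axis_def by simp

lemma ssum_add: "ssum (x + y) = ssum x + ssum y" and ssum_diff: "ssum (x - y) = ssum x - ssum y"
  and ssum_smult: "ssum (g *s x) = g * ssum x"
  unfolding ssum_def by (simp_all add: sum.distrib sum_subtractf sum_distrib_left)

theorem mainTheorem8:
  fixes E :: "'n::finite \<Rightarrow> 'n \<Rightarrow> bool" and a b c d :: 'n
  assumes "simple_graph E" and "a \<noteq> b" and "c \<noteq> d"
  shows "\<not> (\<exists>t::real. \<exists>\<gamma>::complex. t \<ge> 0 \<and> cmod \<gamma> = 1 \<and>
     (mat_exp (mat (\<i> * complex_of_real t) ** laplacian E) *v (basis_vec a + basis_vec b)
        = \<gamma> *s (basis_vec c - basis_vec d)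
      \<or> mat_exp (mat (\<i> * complex_of_real t) ** laplacian E) *v (basis_vec c - basis_vec d)
        = \<gamma> *s (basis_vec a + basis_vec b)))"
proof
  assume "\<exists>t::real. \<exists>\<gamma>::complex. t \<ge> 0 \<and> cmod \<gamma> = 1 \<and>
     (mat_exp (mat (\<i> * complex_of_real t) ** laplacian E) *v (basis_vec a + basis_vec b)
        = \<gamma> *s (basis_vec c - basis_vec d)
      \<or> mat_exp (mat (\<i> * complex_of_real t) ** laplacian E) *v (basis_vec c - basis_vec d)
        = \<gamma> *s (basis_vec a + basis_vec b))"
  then obtain t :: real and \<gamma> :: complex where g: "cmod \<gamma> = 1" and
    h: "mat_exp (mat (\<i> * complex_of_real t) ** laplacian E) *v (basis_vec a + basis_vec b)
        = \<gamma> *s (basis_vec c - basis_vec d)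
      \<or> mat_exp (mat (\<i> * complex_of_real t) ** laplacian E) *v (basis_vec c - basis_vec d)
        = \<gamma> *s (basis_vec a + basis_vec b)" by blast
  have g0: "\<gamma> \<noteq> 0" using g by auto
  from h show False
  proof
    assume e: "mat_exp (mat (\<i> * complex_of_real t) ** laplacian E) *v (basis_vec a + basis_vec b)
        = \<gamma> *s (basis_vec c - basis_vec d)"
    have "ssum (basis_vec a + basis_vec b) = ssum (\<gamma> *s (basis_vec c - basis_vec d))"
      using ssum_exp[OF assms(1)] e by metis
    then show False by (simp add: ssum_add ssum_diff ssum_smult ssum_basis)
  next
    assume e: "mat_exp (mat (\<i> * complex_of_real t) ** laplacian E) *v (basis_vec c - basis_vec d)
        = \<gamma> *s (basis_vec a + basis_vec b)"
    have "ssum (basis_vec c - basis_vec d) = ssum (\<gamma> *s (basis_vec a + basis_vec b))"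
      using ssum_exp[OF assms(1)] e by metis
    then show False using g0 by (simp add: ssum_add ssum_diff ssum_smult ssum_basis)
  qed
qed

end
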